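(* Let $G=\langle r_1,r_2,s_1,s_2,c\ :\ r_1r_2=r_2r_1,\ s_1s_2=s_2s_1,\ r_1s_1c=cr_1s_1=s_1cr_1,\ r_2s_2c=s_2cr_2=cr_2s_2\rangle$, let $F=\langle r',s'\rangle$ be the free group of rank $2$, and let $p_x,p_y:G\to F$ be the homomorphisms with $p_x(r_1)=r'$, $p_x(s_2)=s'$, $p_x(r_2)=p_x(s_1)=p_x(c)=1$ and $p_y(r_2)=r'$, $p_y(s_1)=s'$, $p_y(r_1)=p_y(s_2)=p_y(c)=1$. Let $H\subseteq G$ be the subgroup generated by $r_1r_2$, $s_1s_2$, $c$, and let $g=s_2cr_1s_1cr_2$. Then $p_x(g)=p_y(g)$, $g$ has infinite order in $G$, and $g^n\notin H$ for every integer $n\neq0$.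
   Context: All groups are given by generators and relations as written; $p_x$ and $p_y$ are well-defined homomorphisms on $G$. *)

theory Defs
  imports "HOL-Algebra.Algebra"
begin

text \<open>A word over generators of type 'a is a list of letters (x, e);
  e = False means the generator x, e = True means its inverse.\<close>

type_synonym 'a word = "('a \<times> bool) list"

definition word_inv :: "'a word \<Rightarrow> 'a word" where
  "word_inv w = rev (map (\<lambda>(x, e). (x, \<not> e)) w)"

inductive pres_eq :: "'a word set \<Rightarrow> 'a word \<Rightarrow> 'a word \<Rightarrow> bool" for rels where
  refl: "pres_eq rels w w"
| sym: "pres_eq rels v w \<Longrightarrow> pres_eq rels w v"
| trans: "pres_eq rels u v \<Longrightarrow> pres_eq rels v w \<Longrightarrow> pres_eq rels u w"
| cancel: "pres_eq rels (u @ [(x, e), (x, \<not> e)] @ v) (u @ v)"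
| relator: "r \<in> rels \<Longrightarrow> pres_eq rels (u @ r @ v) (u @ v)"

definition pclass :: "'a word set \<Rightarrow> 'a word \<Rightarrow> 'a word set" where
  "pclass rels w = {v. pres_eq rels w v}"

definition pres_group :: "'a word set \<Rightarrow> ('a word set) monoid" where
  "pres_group rels =
     \<lparr> carrier = range (pclass rels),
       monoid.mult = (\<lambda>A B. \<Union> {pclass rels (u @ v) | u v. u \<in> A \<and> v \<in> B}),
       one = pclass rels [] \<rparr>"

datatype gen = R1 | R2 | S1 | S2 | C

datatype fgen = R' | S'

definition gp :: "gen \<Rightarrow> gen word" where "gp x = [(x, False)]"

definition G_rels :: "gen word set" where
  "G_rels =
    { gp R1 @ gp R2 @ word_inv (gp R2 @ gp R1),
      gp S1 @ gp S2 @ word_inv (gp S2 @ gp S1),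
      gp R1 @ gp S1 @ gp C @ word_inv (gp C @ gp R1 @ gp S1),
      gp C @ gp R1 @ gp S1 @ word_inv (gp S1 @ gp C @ gp R1),
      gp R2 @ gp S2 @ gp C @ word_inv (gp S2 @ gp C @ gp R2),
      gp S2 @ gp C @ gp R2 @ word_inv (gp C @ gp R2 @ gp S2) }"

definition GG :: "(gen word set) monoid" where "GG = pres_group G_rels"

definition FF :: "(fgen word set) monoid" where "FF = pres_group {}"

fun px_letter :: "gen \<times> bool \<Rightarrow> fgen word" where
  "px_letter (R1, e) = [(R', e)]"
| "px_letter (S2, e) = [(S', e)]"
| "px_letter (_, e) = []"

fun py_letter :: "gen \<times> bool \<Rightarrow> fgen word" where
  "py_letter (R2, e) = [(R', e)]"
| "py_letter (S1, e) = [(S', e)]"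
| "py_letter (_, e) = []"

definition px :: "gen word set \<Rightarrow> fgen word set" where
  "px A = \<Union> {pclass {} (concat (map px_letter w)) | w. w \<in> A}"

definition py :: "gen word set \<Rightarrow> fgen word set" where
  "py A = \<Union> {pclass {} (concat (map py_letter w)) | w. w \<in> A}"

definition HH :: "gen word set set" where
  "HH = generate GG {pclass G_rels (gp R1 @ gp R2), pclass G_rels (gp S1 @ gp S2),
                     pclass G_rels (gp C)}"

definition g_elem :: "gen word set" where
  "g_elem = pclass G_rels (gp S2 @ gp C @ gp R1 @ gp S1 @ gp C @ gp R2)"

end

theory Submission
  imports Defs
begin

lemma pres_eq_ctx:
  assumes "pres_eq R u u'" shows "pres_eq R (a @ u @ b) (a @ u' @ b)"
  using assms
proof (induction rule: pres_eq.induct)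
  case (refl w) then show ?case by (rule pres_eq.refl)
next
  case (sym v w) then show ?case by (metis pres_eq.sym)
next
  case (trans u v w) then show ?case by (metis pres_eq.trans)
next
  case (cancel u x e v)
  have "pres_eq R ((a @ u) @ [(x, e), (x, \<not> e)] @ (v @ b)) ((a @ u) @ (v @ b))"
    by (rule pres_eq.cancel)
  then show ?case by simp
next
  case (relator r u v)
  have "pres_eq R ((a @ u) @ r @ (v @ b)) ((a @ u) @ (v @ b))"
    by (rule pres_eq.relator[OF relator])
  then show ?case by simp
qed

lemma pres_eq_append:
  assumes "pres_eq R u u'" "pres_eq R v v'" shows "pres_eq R (u @ v) (u' @ v')"
proof -
  have "pres_eq R ([] @ u @ v) ([] @ u' @ v)" by (rule pres_eq_ctx[OF assms(1)])
  moreover have "pres_eq R (u' @ v @ []) (u' @ v' @ [])" by (rule pres_eq_ctx[OF assms(2)])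
  ultimately show ?thesis by (auto intro: pres_eq.trans)
qed

lemma pclass_eq: "pres_eq R v w \<Longrightarrow> pclass R v = pclass R w"
  unfolding pclass_def by (auto intro: pres_eq.trans pres_eq.sym)

lemma pclass_self: "w \<in> pclass R w"
  unfolding pclass_def by (auto intro: pres_eq.refl)

lemma pclass_mem: "v \<in> pclass R w \<Longrightarrow> pclass R v = pclass R w"
  unfolding pclass_def by (auto intro: pres_eq.trans pres_eq.sym)

lemma mult_pclass:
  "pclass R u \<otimes>\<^bsub>pres_group R\<^esub> pclass R v = pclass R (u @ v)"
proof -
  have "\<Union> {pclass R (u' @ v') | u' v'. u' \<in> pclass R u \<and> v' \<in> pclass R v} = pclass R (u @ v)"
  proof
    show "\<Union> {pclass R (u' @ v') | u' v'. u' \<in> pclass R u \<and> v' \<in> pclass R v} \<subseteq> pclass R (u @ v)"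
    proof (clarify)
      fix x u' v' assume "x \<in> pclass R (u' @ v')" "u' \<in> pclass R u" "v' \<in> pclass R v"
      then have "pres_eq R u u'" "pres_eq R v v'" unfolding pclass_def by auto
      then have "pclass R (u' @ v') = pclass R (u @ v)"
        by (metis pclass_eq pres_eq.sym pres_eq_append)
      then show "x \<in> pclass R (u @ v)" using \<open>x \<in> pclass R (u' @ v')\<close> by simp
    qed
  next
    show "pclass R (u @ v) \<subseteq> \<Union> {pclass R (u' @ v') | u' v'. u' \<in> pclass R u \<and> v' \<in> pclass R v}"
      using pclass_self by blast
  qed
  then show ?thesis unfolding pres_group_def by simp
qed

lemma word_inv_Cons: "word_inv (a # w) = word_inv w @ [(fst a, \<not> snd a)]"
  unfolding word_inv_def by (cases a) auto

lemma word_inv_append: "word_inv (u @ v) = word_inv v @ word_inv u"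
  unfolding word_inv_def by simp

lemma word_inv_cancel: "pres_eq R (word_inv w @ w) []"
proof (induction w)
  case Nil then show ?case by (simp add: word_inv_def pres_eq.refl)
next
  case (Cons a w)
  obtain x e where a: "a = (x, e)" by (cases a)
  have "pres_eq R (word_inv w @ [(x, \<not> e), (x, \<not> \<not> e)] @ w) (word_inv w @ w)"
    by (rule pres_eq.cancel)
  then have "pres_eq R (word_inv (a # w) @ a # w) (word_inv w @ w)"
    by (simp add: a word_inv_Cons)
  then show ?case using Cons by (rule pres_eq.trans)
qed

lemma one_pres: "\<one>\<^bsub>pres_group R\<^esub> = pclass R []"
  by (simp add: pres_group_def)

lemma carrier_pres: "carrier (pres_group R) = range (pclass R)"
  by (simp add: pres_group_def)

lemma group_pres: "group (pres_group R)"
proof (rule groupI)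
  fix x y assume "x \<in> carrier (pres_group R)" "y \<in> carrier (pres_group R)"
  then show "x \<otimes>\<^bsub>pres_group R\<^esub> y \<in> carrier (pres_group R)"
    by (auto simp: mult_pclass carrier_pres)
next
  show "\<one>\<^bsub>pres_group R\<^esub> \<in> carrier (pres_group R)" by (simp add: pres_group_def)
next
  fix x y z assume "x \<in> carrier (pres_group R)" "y \<in> carrier (pres_group R)" "z \<in> carrier (pres_group R)"
  then obtain a b c where "x = pclass R a" "y = pclass R b" "z = pclass R c"
    by (auto simp: pres_group_def)
  then show "x \<otimes>\<^bsub>pres_group R\<^esub> y \<otimes>\<^bsub>pres_group R\<^esub> z = x \<otimes>\<^bsub>pres_group R\<^esub> (y \<otimes>\<^bsub>pres_group R\<^esub> z)"
    by (simp add: mult_pclass)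
next
  fix x assume "x \<in> carrier (pres_group R)"
  then obtain a where "x = pclass R a" by (auto simp: pres_group_def)
  then show "\<one>\<^bsub>pres_group R\<^esub> \<otimes>\<^bsub>pres_group R\<^esub> x = x"
    by (simp add: mult_pclass one_pres)
next
  fix x assume "x \<in> carrier (pres_group R)"
  then obtain a where x: "x = pclass R a" by (auto simp: pres_group_def)
  have "pclass R (word_inv a) \<otimes>\<^bsub>pres_group R\<^esub> x = \<one>\<^bsub>pres_group R\<^esub>"
    by (simp add: x mult_pclass pclass_eq[OF word_inv_cancel] one_pres)
  moreover have "pclass R (word_inv a) \<in> carrier (pres_group R)" by (simp add: pres_group_def)
  ultimately show "\<exists>y\<in>carrier (pres_group R). y \<otimes>\<^bsub>pres_group R\<^esub> x = \<one>\<^bsub>pres_group R\<^esub>" by blast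
qed

lemma carrier_pclass: "pclass R w \<in> carrier (pres_group R)"
  by (simp add: pres_group_def)

lemma inv_pclass: "inv\<^bsub>pres_group R\<^esub> (pclass R w) = pclass R (word_inv w)"
proof -
  interpret group "pres_group R" by (rule group_pres)
  show ?thesis
    by (rule inv_equality) (simp_all add: mult_pclass pclass_eq[OF word_inv_cancel] one_pres carrier_pres)
qed

lemma pow_pclass: "pclass R w [^]\<^bsub>pres_group R\<^esub> (n::nat) = pclass R (concat (replicate n w))"
proof (induction n)
  case 0 then show ?case by (simp add: one_pres)
next
  case (Suc n)
  have "concat (replicate n w) @ w = concat (replicate (Suc n) w)"
    by (induction n) auto
  then show ?case using Suc by (simp add: mult_pclass)
qed

section \<open>An action of G on int x int\<close>

fun lact :: "gen \<times> bool \<Rightarrow> int \<times> int \<Rightarrow> int \<times> int" where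
  "lact (R1, e) (x, y) = (1 - x, y)"
| "lact (R2, e) (x, y) = (1 - x, y)"
| "lact (S1, e) (x, y) = (- x, y)"
| "lact (S2, e) (x, y) = (- x, y)"
| "lact (C, e) (x, y) = (if e then (x + 1, y - 1) else (x - 1, y + 1))"

fun wact :: "gen word \<Rightarrow> int \<times> int \<Rightarrow> int \<times> int" where
  "wact [] p = p"
| "wact (a # w) p = lact a (wact w p)"

lemma wact_append: "wact (u @ v) p = wact u (wact v p)"
  by (induction u) auto

lemma lact_cancel: "lact (x, e) (lact (x, \<not> e) p) = p"
  by (cases x; cases e; cases p) auto

lemma rel_triv: "r \<in> G_rels \<Longrightarrow> wact r p = p"
  by (cases p) (auto simp: G_rels_def gp_def word_inv_def)

lemma wact_pres: "pres_eq G_rels v w \<Longrightarrow> wact v = wact w"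
proof (induction rule: pres_eq.induct)
  case (cancel u x e v)
  show ?case by (rule ext) (simp add: wact_append lact_cancel)
next
  case (relator r u v)
  show ?case by (rule ext) (simp add: wact_append rel_triv[OF relator])
qed auto

lemma wact_class: "v \<in> pclass G_rels w \<Longrightarrow> wact v = wact w"
  unfolding pclass_def by (auto dest: wact_pres)

definition presI :: "gen word \<Rightarrow> bool" where
  "presI w \<longleftrightarrow> (\<forall>x y. fst (wact w (x, y)) + snd (wact w (x, y)) = x + y)"

lemma presI_append: "presI u \<Longrightarrow> presI v \<Longrightarrow> presI (u @ v)"
  unfolding presI_def wact_append by (metis prod.collapse)

lemma HH_inv: "h \<in> HH \<Longrightarrow> \<exists>w. h = pclass G_rels w \<and> presI w"
  unfolding HH_def
proof (induction rule: generate.induct)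
  case one
  show ?case by (rule exI[of _ "[]"]) (simp add: GG_def one_pres presI_def)
next
  case (incl h)
  then show ?case
    by (auto simp: presI_def gp_def)
next
  case (inv h)
  then show ?case
    by (auto simp: GG_def inv_pclass presI_def gp_def word_inv_def)
next
  case (eng h1 h2)
  then show ?case
    by (auto simp: GG_def mult_pclass intro!: presI_append)
qed

definition gw :: "gen word" where
  "gw = gp S2 @ gp C @ gp R1 @ gp S1 @ gp C @ gp R2"

lemma wact_gw: "wact gw (x, y) = (x, y + 2)"
  by (simp add: gw_def gp_def)

lemma wact_gwpow: "wact (concat (replicate n gw)) (x, y) = (x, y + 2 * int n)"
  by (induction n arbitrary: y) (auto simp: wact_append wact_gw)

lemma wact_inv: "wact (word_inv w) (wact w p) = p"
  using wact_pres[OF word_inv_cancel[of G_rels w]] by (metis wact.simps(1) wact_append)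

lemma g_pow_nat: "g_elem [^]\<^bsub>GG\<^esub> (n::nat) = pclass G_rels (concat (replicate n gw))"
  by (simp add: g_elem_def GG_def pow_pclass gw_def)

definition pxw :: "gen word \<Rightarrow> fgen word" where "pxw w = concat (map px_letter w)"
definition pyw :: "gen word \<Rightarrow> fgen word" where "pyw w = concat (map py_letter w)"

lemma free_cancel_ctx: "pres_eq {} (a @ (z, e) # (z, \<not> e) # b) (a @ b)"
  using pres_eq.cancel[of "{}" a z e b] by simp

lemma pxw_pres: "pres_eq G_rels v w \<Longrightarrow> pres_eq {} (pxw v) (pxw w)"
proof (induction rule: pres_eq.induct)
  case (refl w) then show ?case by (rule pres_eq.refl)
next
  case (sym v w) then show ?case by (metis pres_eq.sym)
next
  case (trans u v w) then show ?case by (metis pres_eq.trans)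
next
  case (cancel u x e v)
  show ?case
    by (cases x) (simp_all add: pxw_def free_cancel_ctx pres_eq.refl)
next
  case (relator r u v)
  have "pxw r = [(R', False), (R', True)] \<or> pxw r = [(S', False), (S', True)]"
    using relator by (auto simp: G_rels_def gp_def word_inv_def pxw_def)
  then show ?case
    using free_cancel_ctx[of "pxw u" R' False "pxw v"] free_cancel_ctx[of "pxw u" S' False "pxw v"]
    by (auto simp: pxw_def)
qed

lemma pyw_pres: "pres_eq G_rels v w \<Longrightarrow> pres_eq {} (pyw v) (pyw w)"
proof (induction rule: pres_eq.induct)
  case (refl w) then show ?case by (rule pres_eq.refl)
next
  case (sym v w) then show ?case by (metis pres_eq.sym)
next
  case (trans u v w) then show ?case by (metis pres_eq.trans)
next
  case (cancel u x e v)
  show ?case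
    by (cases x) (simp_all add: pyw_def free_cancel_ctx pres_eq.refl)
next
  case (relator r u v)
  have "pyw r = [(R', False), (R', True)] \<or> pyw r = [(S', False), (S', True)]"
    using relator by (auto simp: G_rels_def gp_def word_inv_def pyw_def)
  then show ?case
    using free_cancel_ctx[of "pyw u" R' False "pyw v"] free_cancel_ctx[of "pyw u" S' False "pyw v"]
    by (auto simp: pyw_def)
qed

lemma px_class: "px (pclass G_rels w) = pclass {} (pxw w)"
proof -
  have *: "pclass {} (pxw v) = pclass {} (pxw w)" if "v \<in> pclass G_rels w" for v
  proof -
    from that have "pres_eq G_rels w v" by (simp add: pclass_def)
    then have "pres_eq {} (pxw w) (pxw v)" by (rule pxw_pres)
    then show ?thesis by (metis pclass_eq)
  qed
  have "{pclass {} (pxw v) | v. v \<in> pclass G_rels w} = {pclass {} (pxw w)}"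
    using * pclass_self by blast
  moreover have "px (pclass G_rels w) = \<Union> {pclass {} (pxw v) | v. v \<in> pclass G_rels w}"
    by (simp add: px_def pxw_def)
  ultimately show ?thesis by simp
qed

lemma py_class: "py (pclass G_rels w) = pclass {} (pyw w)"
proof -
  have *: "pclass {} (pyw v) = pclass {} (pyw w)" if "v \<in> pclass G_rels w" for v
  proof -
    from that have "pres_eq G_rels w v" by (simp add: pclass_def)
    then have "pres_eq {} (pyw w) (pyw v)" by (rule pyw_pres)
    then show ?thesis by (metis pclass_eq)
  qed
  have "{pclass {} (pyw v) | v. v \<in> pclass G_rels w} = {pclass {} (pyw w)}"
    using * pclass_self by blast
  moreover have "py (pclass G_rels w) = \<Union> {pclass {} (pyw v) | v. v \<in> pclass G_rels w}"
    by (simp add: py_def pyw_def)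
  ultimately show ?thesis by simp
qed

theorem mainTheorem14:
  shows "px g_elem = py g_elem
    \<and> (\<forall>n::nat. n > 0 \<longrightarrow> g_elem [^]\<^bsub>GG\<^esub> n \<noteq> \<one>\<^bsub>GG\<^esub>)
    \<and> (\<forall>n::int. n \<noteq> 0 \<longrightarrow> g_elem [^]\<^bsub>GG\<^esub> n \<notin> HH)"
proof (intro conjI allI impI)
  show "px g_elem = py g_elem"
    by (simp add: g_elem_def px_class py_class pxw_def pyw_def gp_def)
next
  fix n :: nat assume "n > 0"
  show "g_elem [^]\<^bsub>GG\<^esub> n \<noteq> \<one>\<^bsub>GG\<^esub>"
  proof
    assume "g_elem [^]\<^bsub>GG\<^esub> n = \<one>\<^bsub>GG\<^esub>"
    then have "pclass G_rels (concat (replicate n gw)) = pclass G_rels []"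
      by (metis g_pow_nat GG_def one_pres)
    then have "[] \<in> pclass G_rels (concat (replicate n gw))" using pclass_self by metis
    then have "wact [] = wact (concat (replicate n gw))" by (rule wact_class)
    then have "wact [] (0, 0) = wact (concat (replicate n gw)) (0, 0)" by simp
    then show False using \<open>n > 0\<close> by (simp add: wact_gwpow)
  qed
next
  fix n :: int assume "n \<noteq> 0"
  show "g_elem [^]\<^bsub>GG\<^esub> n \<notin> HH"
  proof
    assume "g_elem [^]\<^bsub>GG\<^esub> n \<in> HH"
    then obtain w where w: "g_elem [^]\<^bsub>GG\<^esub> n = pclass G_rels w" "presI w"
      using HH_inv by blast
    define W where "W = concat (replicate (nat \<bar>n\<bar>) gw)"
    define W' where "W' = (if n < 0 then word_inv W else W)"
    have "g_elem [^]\<^bsub>GG\<^esub> n = pclass G_rels W'"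
      using int_pow_def2[of GG g_elem n]
      unfolding W'_def W_def
      by (cases "n < 0") (simp_all add: g_pow_nat inv_pclass[of G_rels, folded GG_def])
    then have "W' \<in> pclass G_rels w" using w pclass_self by metis
    then have "wact W' = wact w" by (rule wact_class)
    then have I: "fst (wact W' (0, 0)) + snd (wact W' (0, 0)) = 0"
      using w(2) unfolding presI_def by (metis add.right_neutral)
    show False
    proof (cases "n < 0")
      case True
      have "wact (word_inv W) (wact W (0, - 2 * int (nat \<bar>n\<bar>))) = (0, - 2 * int (nat \<bar>n\<bar>))"
        by (rule wact_inv)
      then have "wact W' (0, 0) = (0, - 2 * int (nat \<bar>n\<bar>))"
        using True by (simp add: W'_def W_def wact_gwpow)
      then show False using I \<open>n \<noteq> 0\<close> by simp
    next
      case False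
      then have "wact W' (0, 0) = (0, 2 * int (nat \<bar>n\<bar>))"
        by (simp add: W'_def W_def wact_gwpow)
      then show False using I \<open>n \<noteq> 0\<close> by simp
    qed
  qed
qed

end
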